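(* Let $P_m(z)=\sum_{j=0}^m \frac{(2m-j)!}{j!(m-j)!}z^j$ and $R_m(z)=P_m(z)/P_m(-z)$. If $m$ is even, let $\hat z_m(t,0)$ be the solution of $R_m(z)=e^t$ satisfying $\hat z_m(t,0)=D_m/t+\mathcal{O}(1)$ as $|t|\to0$ for some constant $D_m>0$; if $m$ is odd, let $\hat z_m(t,\pi)$ be the solution of $R_m(z)=-e^t$ satisfying $\hat z_m(t,\pi)=E_m/t+\mathcal{O}(1)$ as $|t|\to0$ for some constant $E_m>0$. Then, as $|t|\to0$, $$R_m'(\hat z_m(t,0))=\mathcal{O}(t^2)\ \text{ for even } m,\qquad R_m'(\hat z_m(t,\pi))=\mathcal{O}(t^2)\ \text{ for odd } m.$$
   Context: $R_m$ is the stability function of the $m$-stage Gauss Runge–Kutta method (the $(m,m)$-Padé approximant of $e^z$). For even $m$ exactly one solution of $R_m(z)=e^t$, and for odd $m$ exactly one solution of $R_m(z)=-e^t$, tends to infinity as $t\to0$, with the stated asymptotics. *)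

theory Defs
  imports "HOL-Analysis.Analysis" "HOL-Library.Landau_Symbols"
begin

text \<open>Numerator of the (m,m)-Pade approximant of exp.\<close>
definition gaussP :: "nat \<Rightarrow> complex \<Rightarrow> complex" where
  "gaussP m z = (\<Sum>j=0..m. of_real (fact (2*m - j) / (fact j * fact (m - j))) * z ^ j)"

definition gaussR :: "nat \<Rightarrow> complex \<Rightarrow> complex" where
  "gaussR m z = gaussP m z / gaussP m (- z)"

end

theory Submission
  imports Defs
begin

definition ca :: "nat \<Rightarrow> nat \<Rightarrow> complex" where
  "ca m j = of_real (fact (2*m - j) / (fact j * fact (m - j)))"

definition dP :: "nat \<Rightarrow> complex \<Rightarrow> complex" where
  "dP m z = (\<Sum>j=0..m. ca m j * (of_nat j * z ^ (j - 1)))"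

lemma gaussP_ca: "gaussP m z = (\<Sum>j=0..m. ca m j * z ^ j)"
  by (simp add: gaussP_def ca_def)

lemma ca_m: "ca m m = 1"
  by (simp add: ca_def)

lemma dP_deriv: "(gaussP m has_field_derivative dP m z) (at z)"
  unfolding gaussP_ca dP_def
  by (auto intro!: derivative_eq_intros sum.cong simp: mult_ac)

lemma dPm_deriv: "((\<lambda>z. gaussP m (- z)) has_field_derivative - dP m (- z)) (at z)"
proof -
  have "(uminus has_field_derivative -1) (at z)" by (auto intro!: derivative_eq_intros)
  from DERIV_chain2[OF dP_deriv[of m "-z"] this] show ?thesis by simp
qed

lemma deriv_R:
  assumes "gaussP m (- z) \<noteq> 0"
  shows "deriv (gaussR m) z = (dP m z * gaussP m (-z) + gaussP m z * dP m (-z)) / (gaussP m (-z))^2"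
proof -
  have "(gaussR m has_field_derivative
     (dP m z * gaussP m (-z) - gaussP m z * (- dP m (-z))) / (gaussP m (-z) * gaussP m (-z))) (at z)"
    unfolding gaussR_def[abs_def]
    by (rule DERIV_divide[OF dP_deriv dPm_deriv assms])
  from DERIV_imp_deriv[OF this] show ?thesis by (simp add: power2_eq_square)
qed

lemma num_bound:
  assumes "m \<ge> 1" "norm z \<ge> 1"
  shows "norm (dP m z * gaussP m (-z) + gaussP m z * dP m (-z))
     \<le> (\<Sum>i=0..m. \<Sum>j=0..m. norm (ca m i) * norm (ca m j) * of_nat (i+j)) * norm z ^ (2*m-2)"
proof -
  define T where "T i j = ca m i * ca m j * (of_nat i * z^(i-1) * (-z)^j + of_nat j * z^i * (-z)^(j-1))" for i j
  have eq: "dP m z * gaussP m (-z) + gaussP m z * dP m (-z) = (\<Sum>i=0..m. \<Sum>j=0..m. T i j)"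
    unfolding dP_def gaussP_ca sum_product T_def
    by (simp add: sum.distrib[symmetric] algebra_simps)
  have bnd: "norm (T i j) \<le> norm (ca m i) * norm (ca m j) * of_nat (i+j) * norm z ^ (2*m-2)"
    if "i \<le> m" "j \<le> m" for i j
  proof (cases "i = m \<and> j = m")
    case True
    have "(-z)^m = - z * (-z)^(m-1)" using assms(1)
      by (metis One_nat_def Suc_pred less_le_trans power_Suc zero_less_one)
    moreover have "z^m = z * z^(m-1)" using assms(1)
      by (metis One_nat_def Suc_pred less_le_trans power_Suc zero_less_one)
    ultimately have "T i j = 0" using True by (simp add: T_def algebra_simps)
    then show ?thesis by simp
  next
    case False
    have ij: "i + j \<le> 2*m - 1" using False that by auto
    have A: "norm (of_nat i * z^(i-1) * (-z)^j) \<le> of_nat i * norm z ^ (2*m-2)"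
    proof (cases "i = 0")
      case False
      have "norm (of_nat i * z^(i-1) * (-z)^j) = of_nat i * norm z ^ (i - 1 + j)"
        by (simp add: norm_mult norm_power power_add)
      also have "\<dots> \<le> of_nat i * norm z ^ (2*m-2)"
        using False ij assms(2) by (intro mult_left_mono power_increasing) auto
      finally show ?thesis .
    qed simp
    have B: "norm (of_nat j * z^i * (-z)^(j-1)) \<le> of_nat j * norm z ^ (2*m-2)"
    proof (cases "j = 0")
      case False
      have "norm (of_nat j * z^i * (-z)^(j-1)) = of_nat j * norm z ^ (i + (j - 1))"
        by (simp add: norm_mult norm_power power_add)
      also have "\<dots> \<le> of_nat j * norm z ^ (2*m-2)"
        using False ij assms(2) by (intro mult_left_mono power_increasing) auto
      finally show ?thesis .
    qed simp
    have "norm (T i j) \<le> norm (ca m i) * norm (ca m j) *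
        (norm (of_nat i * z^(i-1) * (-z)^j) + norm (of_nat j * z^i * (-z)^(j-1)))"
      unfolding T_def norm_mult[of "ca m i * ca m j"] norm_mult[of "ca m i"]
      by (intro mult_left_mono norm_triangle_ineq) auto
    also have "\<dots> \<le> norm (ca m i) * norm (ca m j) * (of_nat i * norm z ^ (2*m-2) + of_nat j * norm z ^ (2*m-2))"
      using A B by (intro mult_left_mono) auto
    finally show ?thesis by (simp add: algebra_simps)
  qed
  have "norm (\<Sum>i=0..m. \<Sum>j=0..m. T i j) \<le> (\<Sum>i=0..m. \<Sum>j=0..m. norm (T i j))"
    by (intro order.trans[OF norm_sum] sum_mono norm_sum)
  also have "\<dots> \<le> (\<Sum>i=0..m. \<Sum>j=0..m. norm (ca m i) * norm (ca m j) * of_nat (i+j) * norm z ^ (2*m-2))"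
    using bnd by (intro sum_mono) auto
  finally show ?thesis unfolding eq by (simp add: sum_distrib_right)
qed

lemma den_bound:
  assumes "m \<ge> 1"
  shows "\<exists>R\<ge>1. \<forall>w. norm w \<ge> R \<longrightarrow> norm (gaussP m w) \<ge> norm w ^ m / 2"
proof -
  define A where "A = (\<Sum>j<m. norm (ca m j))"
  have A0: "A \<ge> 0" unfolding A_def by (intro sum_nonneg) auto
  show ?thesis
  proof (intro exI[of _ "max 1 (2*A)"] conjI allI impI)
    fix w :: complex assume w: "max 1 (2*A) \<le> norm w"
    have split: "gaussP m w = w^m + (\<Sum>j<m. ca m j * w^j)"
      unfolding gaussP_ca using ca_m[of m]
      by (simp add: atLeast0AtMost lessThan_Suc_atMost[symmetric] add.commute)
    have "norm (\<Sum>j<m. ca m j * w^j) \<le> (\<Sum>j<m. norm (ca m j) * norm w ^ (m-1))"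
    proof (intro order.trans[OF norm_sum] sum_mono)
      fix j assume "j \<in> {..<m}"
      then show "norm (ca m j * w^j) \<le> norm (ca m j) * norm w ^ (m-1)"
        using w by (auto simp: norm_mult norm_power intro!: mult_left_mono power_increasing)
    qed
    also have "\<dots> = A * norm w ^ (m-1)" by (simp add: A_def sum_distrib_right)
    also have "\<dots> \<le> norm w / 2 * norm w ^ (m-1)" using w by (intro mult_right_mono) auto
    also have "\<dots> = norm w ^ m / 2" using assms
      by (metis One_nat_def Suc_pred less_le_trans power_Suc zero_less_one times_divide_eq_left)
    finally have "norm (\<Sum>j<m. ca m j * w^j) \<le> norm w ^ m / 2" .
    moreover have "norm (gaussP m w) \<ge> norm (w^m) - norm (\<Sum>j<m. ca m j * w^j)"
      unfolding split by (metis norm_diff_ineq norm_minus_commute diff_minus_eq_add norm_triangle_ineq2 add_diff_cancel_right')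
    ultimately show "norm (gaussP m w) \<ge> norm w ^ m / 2" by (simp add: norm_power)
  qed simp
qed

lemma main_bound:
  assumes "m \<ge> 1"
  shows "\<exists>K R. K \<ge> 0 \<and> R \<ge> 1 \<and> (\<forall>z. norm z \<ge> R \<longrightarrow> norm (deriv (gaussR m) z) \<le> K / norm z ^ 2)"
proof -
  define K where "K = (\<Sum>i=0..m. \<Sum>j=0..m. norm (ca m i) * norm (ca m j) * of_nat (i+j))"
  have K0: "K \<ge> 0" unfolding K_def by (intro sum_nonneg) auto
  obtain R where R: "R \<ge> 1" "\<And>w. norm w \<ge> R \<Longrightarrow> norm (gaussP m w) \<ge> norm w ^ m / 2"
    using den_bound[OF assms] by blast
  have "norm (deriv (gaussR m) z) \<le> (4*K) / norm z ^ 2" if z: "norm z \<ge> R" for z :: complex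
  proof -
    have z1: "norm z \<ge> 1" using z R by simp
    have Pz: "norm (gaussP m (-z)) \<ge> norm z ^ m / 2" using R(2)[of "-z"] z by simp
    have pos: "norm z ^ m / 2 > 0" using z1 by (intro divide_pos_pos zero_less_power) auto
    hence nz: "gaussP m (-z) \<noteq> 0" using Pz by auto
    have "norm (deriv (gaussR m) z) = norm (dP m z * gaussP m (-z) + gaussP m z * dP m (-z)) / norm (gaussP m (-z)) ^ 2"
      by (simp add: deriv_R[OF nz] norm_divide norm_power)
    also have "\<dots> \<le> K * norm z ^ (2*m-2) / (norm z ^ m / 2) ^ 2"
    proof (rule frac_le)
      show "norm (dP m z * gaussP m (-z) + gaussP m z * dP m (-z)) \<le> K * norm z ^ (2*m-2)"
        using num_bound[OF assms z1] unfolding K_def .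
      show "0 \<le> K * norm z ^ (2*m-2)" using K0 by simp
      show "0 < (norm z ^ m / 2) ^ 2" by (rule zero_less_power[OF pos])
      show "(norm z ^ m / 2) ^ 2 \<le> norm (gaussP m (-z)) ^ 2"
        using Pz pos by (intro power_mono) auto
    qed
    also have "\<dots> = 4 * K / norm z ^ 2"
    proof -
      have "(norm z ^ m / 2) ^ 2 = norm z ^ (2*m-2) * norm z ^ 2 / 4"
      proof -
        have e: "2*m = (2*m-2) + 2" using assms by simp
        have "(norm z ^ m / 2) ^ 2 = norm z ^ (2*m) / 4"
          by (simp add: power_divide power_mult[symmetric] mult.commute)
        also have "norm z ^ (2*m) = norm z ^ (2*m-2) * norm z ^ 2"
          by (subst e) (rule power_add)
        finally show ?thesis by simp
      qed
      then show ?thesis using z1 by (simp add: field_simps)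
    qed
    finally show ?thesis .
  qed
  then show ?thesis using K0 R(1) by (intro exI[of _ "4*K"] exI[of _ R]) auto
qed

theorem lemma5:
  fixes m :: nat and zh :: "real \<Rightarrow> complex" and D :: real
  assumes "m \<ge> 1"
    and "\<forall>\<^sub>F t in at 0. gaussR m (zh t) = (if even m then exp (of_real t) else - exp (of_real t))"
    and "D > 0"
    and "(\<lambda>t. zh t - of_real (D / t)) \<in> O[at 0](\<lambda>_. 1)"
  shows "(\<lambda>t. deriv (gaussR m) (zh t)) \<in> O[at 0](\<lambda>t. (of_real t)^2)"
proof -
  obtain K R where KR: "K \<ge> 0" "R \<ge> 1" "\<And>z. norm z \<ge> R \<Longrightarrow> norm (deriv (gaussR m) z) \<le> K / norm z ^ 2"
    using main_bound[OF assms(1)] by blast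
  obtain C where C: "C > 0" "\<forall>\<^sub>F t in at 0. norm (zh t - of_real (D / t)) \<le> C * norm (1::complex)"
    using landau_o.bigE[OF assms(4)] by blast
  define d where "d = min (D / (2*C)) (D / (2*R))"
  have d: "d > 0" using assms(3) C(1) KR(2) by (simp add: d_def)
  have ev: "\<forall>\<^sub>F t in at (0::real). t \<noteq> 0 \<and> abs t < d"
    unfolding eventually_at using d by (auto intro!: exI[of _ d] simp: dist_real_def)
  show ?thesis
  proof (rule landau_o.bigI[of "4*K/D^2 + 1"])
    show "4*K/D^2 + 1 > 0" using KR(1) assms(3) by (simp add: add_nonneg_pos)
    show "\<forall>\<^sub>F t in at 0. norm (deriv (gaussR m) (zh t)) \<le> (4*K/D^2 + 1) * norm ((of_real t :: complex)^2)"
      using ev C(2)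
    proof eventually_elim
      case (elim t)
      then have t0: "t \<noteq> 0" and td: "abs t < d" and zc: "norm (zh t - of_real (D / t)) \<le> C" by auto
      have at: "abs t > 0" using t0 by simp
      have "norm (of_real (D/t) :: complex) = D / abs t" using assms(3) by (simp add: norm_divide)
      hence "norm (zh t) \<ge> D / abs t - C"
        using zc norm_triangle_ineq2[of "of_real (D / t)" "zh t"] by (simp add: norm_minus_commute)
      moreover have "C \<le> D / (2 * abs t)"
        using td at C(1) unfolding d_def by (simp add: field_simps)
      ultimately have zb: "norm (zh t) \<ge> D / (2 * abs t)" by (simp add: field_simps)
      moreover have "D / (2 * abs t) \<ge> R"
        using td at KR(2) unfolding d_def by (simp add: field_simps)
      ultimately have zR: "norm (zh t) \<ge> R" by simp
      have "norm (deriv (gaussR m) (zh t)) \<le> K / norm (zh t) ^ 2" using KR(3)[OF zR] .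
      also have "\<dots> \<le> K / (D / (2 * abs t)) ^ 2"
      proof -
        have dp: "D / (2 * abs t) > 0" using at assms(3) by simp
        hence "norm (zh t) > 0" using zb by linarith
        then show ?thesis using dp zb KR(1)
          by (intro divide_left_mono power_mono mult_pos_pos zero_less_power) auto
      qed
      also have "\<dots> = 4*K/D^2 * t^2" using at assms(3) by (simp add: field_simps power2_eq_square)
      also have "\<dots> \<le> (4*K/D^2 + 1) * t^2" by (intro mult_right_mono) auto
      also have "\<dots> = (4*K/D^2 + 1) * norm ((of_real t :: complex)^2)" by (simp add: norm_power)
      finally show ?case .
    qed
  qed
qed

end
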